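(* Consider control protocol (C4) with $r_1=\cdots=r_n\ge\frac1{n-1}$. Then for any constants $z^*\in[0,1]$ and $\alpha^*>0$, the set $S_{z^*,\alpha^*}=\{(x_1,\dots,x_n)\in[0,1]^n:\max_{i\in\mathcal V}|x_i-z^*|<\alpha^*\}$ is finite-time robustly reachable from $[0,1]^n$.
   Context: Fix $n\ge3$, $\mathcal V=\{1,\dots,n\}$, confidence thresholds $r_i\in(0,1]$, $\eta>0$. States $x(t)\in[0,1]^n$. Neighbor set $\mathcal N_i(t)=\{j:|x_j(t)-x_i(t)|\le r_i\}$ (contains $i$), $\Pi_{[0,1]}(y)=\min\{1,\max\{0,y\}\}$. Control protocol (C4): $x_i(t+1)=\Pi_{[0,1]}\big(|\mathcal N_i(t)|^{-1}[x_i(t)+\sum_{j\in\mathcal N_i(t)\setminus\{i\}}(x_j(t)+u_{ji}(t)+b_{ji}(t))]\big)$, where for $j\in\mathcal N_i(t)\setminus\{i\}$: $\delta_i(t)\in(0,\eta)$ is a chosen parameter, $u_{ji}(t)\in[-\eta+\delta_i(t),\eta-\delta_i(t)]$ a chosen control input, $b_{ji}(t)\in[-\delta_i(t),\delta_i(t)]$ an arbitrary uncertainty; the choices may depend on $x(0),\dots,x(t)$. A set $S\subseteq[0,1]^n$ is finite-time robustly reachable from $[0,1]^n$ under the protocol if there exist constants $T>0$ and $\varepsilon\in(0,\eta)$ such that for every $x(0)\in[0,1]^n$, either $x(0)\in S$, or one can choose $\delta_i(t)\in[\varepsilon,\eta)$ and $u_{ji}(t)\in[-\eta+\delta_i(t),\eta-\delta_i(t)]$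 ($0\le t<T$, $i\in\mathcal V$, $j\in\mathcal N_i(t)\setminus\{i\}$) guaranteeing that for arbitrary $b_{ji}(t)\in[-\delta_i(t),\delta_i(t)]$ there is $t\in[1,T]$ with $x(t)\in S$. *)

theory Defs
  imports Complex_Main
begin

text \<open>Agents are indexed by 0..n-1; a state is a function nat => real
  (only the values at indices < n matter).\<close>

definition proj01 :: "real \<Rightarrow> real" where
  "proj01 y = min 1 (max 0 y)"

definition nbrs :: "nat \<Rightarrow> (nat \<Rightarrow> real) \<Rightarrow> (nat \<Rightarrow> real) \<Rightarrow> nat \<Rightarrow> nat set" where
  "nbrs n r x i = {j. j < n \<and> \<bar>x j - x i\<bar> \<le> r i}"

text \<open>One step of protocol (C4); u j i and b j i are u_{ji}(t), b_{ji}(t).\<close>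
definition c4_step :: "nat \<Rightarrow> (nat \<Rightarrow> real) \<Rightarrow> (nat \<Rightarrow> real)
    \<Rightarrow> (nat \<Rightarrow> nat \<Rightarrow> real) \<Rightarrow> (nat \<Rightarrow> nat \<Rightarrow> real) \<Rightarrow> (nat \<Rightarrow> real)" where
  "c4_step n r x u b = (\<lambda>i. proj01
     ((x i + (\<Sum>j\<in>nbrs n r x i - {i}. x j + u j i + b j i)) / real (card (nbrs n r x i))))"

text \<open>History of states x(0),...,x(t) as a list of length t+1, under
  feedback choices U (control inputs, depending on the history) and
  uncertainties B t j i.\<close>
fun c4_hist :: "nat \<Rightarrow> (nat \<Rightarrow> real) \<Rightarrow> (nat \<Rightarrow> real)
    \<Rightarrow> ((nat \<Rightarrow> real) list \<Rightarrow> nat \<Rightarrow> nat \<Rightarrow> real)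
    \<Rightarrow> (nat \<Rightarrow> nat \<Rightarrow> nat \<Rightarrow> real) \<Rightarrow> nat \<Rightarrow> (nat \<Rightarrow> real) list" where
  "c4_hist n r x0 U B 0 = [x0]"
| "c4_hist n r x0 U B (Suc t) =
     (let h = c4_hist n r x0 U B t in h @ [c4_step n r (last h) (U h) (B t)])"

definition c4_traj :: "nat \<Rightarrow> (nat \<Rightarrow> real) \<Rightarrow> (nat \<Rightarrow> real)
    \<Rightarrow> ((nat \<Rightarrow> real) list \<Rightarrow> nat \<Rightarrow> nat \<Rightarrow> real)
    \<Rightarrow> (nat \<Rightarrow> nat \<Rightarrow> nat \<Rightarrow> real) \<Rightarrow> nat \<Rightarrow> (nat \<Rightarrow> real)" where
  "c4_traj n r x0 U B t = last (c4_hist n r x0 U B t)"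

definition unit_cube :: "nat \<Rightarrow> (nat \<Rightarrow> real) set" where
  "unit_cube n = {x. \<forall>i<n. 0 \<le> x i \<and> x i \<le> 1}"

text \<open>Finite-time robust reachability of S from [0,1]^n under (C4).
  D h i = delta_i(t), U h j i = u_{ji}(t), where h = [x(0),...,x(t)].\<close>
definition robustly_reachable_C4 ::
    "nat \<Rightarrow> (nat \<Rightarrow> real) \<Rightarrow> real \<Rightarrow> (nat \<Rightarrow> real) set \<Rightarrow> bool" where
  "robustly_reachable_C4 n r \<eta> S \<longleftrightarrow>
    (\<exists>(T::nat) \<epsilon>::real. T > 0 \<and> 0 < \<epsilon> \<and> \<epsilon> < \<eta> \<and>
      (\<forall>x0 \<in> unit_cube n. x0 \<in> S \<or>
        (\<exists>D :: (nat \<Rightarrow> real) list \<Rightarrow> nat \<Rightarrow> real.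
         \<exists>U :: (nat \<Rightarrow> real) list \<Rightarrow> nat \<Rightarrow> nat \<Rightarrow> real.
           (\<forall>h i. i < n \<longrightarrow> \<epsilon> \<le> D h i \<and> D h i < \<eta>) \<and>
           (\<forall>h i j. i < n \<longrightarrow> j < n \<longrightarrow> j \<noteq> i \<longrightarrow>
               - \<eta> + D h i \<le> U h j i \<and> U h j i \<le> \<eta> - D h i) \<and>
           (\<forall>B :: nat \<Rightarrow> nat \<Rightarrow> nat \<Rightarrow> real.
              (\<forall>t<T. \<forall>i<n. \<forall>j<n. j \<noteq> i \<longrightarrow>
                  \<bar>B t j i\<bar> \<le> D (c4_hist n r x0 U B t) i) \<longrightarrow>
              (\<exists>t\<in>{1..T}. c4_traj n r x0 U B t \<in> S)))))"

end

theory Submission imports Defs begin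

lemma proj01_range: "0 \<le> proj01 y" "proj01 y \<le> 1"
  by (auto simp: proj01_def)
lemma proj01_id: "0 \<le> y \<Longrightarrow> y \<le> 1 \<Longrightarrow> proj01 y = y"
  by (auto simp: proj01_def)
lemma proj01_lip: "\<bar>proj01 y - proj01 y'\<bar> \<le> \<bar>y - y'\<bar>"
  by (auto simp: proj01_def min_def max_def)
lemma proj01_ge: "min 1 y \<le> proj01 y"
  by (auto simp: proj01_def)
lemma proj01_le: "proj01 y \<le> max 0 y"
  by (auto simp: proj01_def)

lemma step_form:
  fixes x :: "nat \<Rightarrow> real"
  assumes i: "i < n" and r0: "0 \<le> r i"
    and u: "\<And>j. j \<in> nbrs n r x i - {i} \<Longrightarrow> u j i = w"
    and b: "\<And>j. j \<in> nbrs n r x i - {i} \<Longrightarrow> \<bar>b j i\<bar> \<le> e"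
  shows "\<exists>y. c4_step n r x u b i = proj01 y \<and>
     (\<Sum>j\<in>nbrs n r x i. x j) + (real (card (nbrs n r x i)) - 1) * (w - e) \<le> real (card (nbrs n r x i)) * y \<and>
     real (card (nbrs n r x i)) * y \<le> (\<Sum>j\<in>nbrs n r x i. x j) + (real (card (nbrs n r x i)) - 1) * (w + e)"
proof -
  let ?N = "nbrs n r x i"
  have fin: "finite ?N" unfolding nbrs_def by auto
  have iin: "i \<in> ?N" using i r0 unfolding nbrs_def by auto
  have k1: "card ?N \<ge> 1" using fin iin by (metis One_nat_def Suc_leI card_gt_0_iff empty_iff)
  have cN: "real (card (?N - {i})) = real (card ?N) - 1"
    using fin iin k1 by (simp add: card_Diff_singleton of_nat_diff)
  define y where "y = (x i + (\<Sum>j\<in>?N - {i}. x j + u j i + b j i)) / real (card ?N)"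
  have st: "c4_step n r x u b i = proj01 y" unfolding c4_step_def y_def by simp
  have S: "(\<Sum>j\<in>?N. x j) = x i + (\<Sum>j\<in>?N - {i}. x j)"
    using fin iin by (simp add: sum.remove)
  have e1: "(\<Sum>j\<in>?N - {i}. x j + u j i + b j i) = (\<Sum>j\<in>?N - {i}. x j) + (\<Sum>j\<in>?N - {i}. w + b j i)"
    using u by (simp add: sum.distrib add.assoc)
  have lo: "(\<Sum>j\<in>?N - {i}. w - e) \<le> (\<Sum>j\<in>?N - {i}. w + b j i)"
    by (rule sum_mono) (use b in force)
  have hi: "(\<Sum>j\<in>?N - {i}. w + b j i) \<le> (\<Sum>j\<in>?N - {i}. w + e)"
    by (rule sum_mono) (use b in force)
  have kpos: "real (card ?N) > 0" using k1 by simp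
  have ky: "real (card ?N) * y = x i + (\<Sum>j\<in>?N - {i}. x j + u j i + b j i)"
    unfolding y_def using kpos by simp
  show ?thesis
    apply (rule exI[of _ y])
    using st S e1 lo hi cN ky by (simp add: algebra_simps)
qed

fun Tm :: "nat \<Rightarrow> nat \<Rightarrow> nat \<Rightarrow> nat \<Rightarrow> nat" where
  "Tm R m 0 s = 0"
| "Tm R m (Suc l) 0 = 0"
| "Tm R m (Suc l) (Suc s) = R + Tm R m l m + Tm R m (Suc l) s"

locale L10 =
  fixes n :: nat and r \<eta> z \<alpha> :: real
  assumes n3: "n \<ge> 3" and eta: "\<eta> > 0" and r1: "r \<le> 1" and rn: "r \<ge> 1 / (real n - 1)"
    and z0: "0 \<le> z" and z1: "z \<le> 1" and alpha: "\<alpha> > 0"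
begin

definition "q = min \<eta> r"
definition "\<epsilon> = min (q/16) (\<alpha>/2)"
definition "P = q/2"
definition "\<gamma> = q/8"

definition nb :: "(nat \<Rightarrow> real) \<Rightarrow> nat \<Rightarrow> nat set" where
  "nb x i = nbrs n (\<lambda>_. r) x i"
definition iso :: "(nat \<Rightarrow> real) \<Rightarrow> nat \<Rightarrow> bool" where
  "iso x i \<longleftrightarrow> (\<forall>j<n. j \<noteq> i \<longrightarrow> r < \<bar>x j - x i\<bar>)"
definition NI :: "(nat \<Rightarrow> real) \<Rightarrow> nat set" where
  "NI x = {i. i < n \<and> \<not> iso x i}"
definition ISO :: "(nat \<Rightarrow> real) \<Rightarrow> nat set" where
  "ISO x = {i. i < n \<and> iso x i}"
definition Zs :: "(nat \<Rightarrow> real) \<Rightarrow> bool" where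
  "Zs x \<longleftrightarrow> (\<forall>i<n. \<forall>j<n. \<bar>x i - x j\<bar> \<le> r)"
definition Cs :: "(nat \<Rightarrow> real) \<Rightarrow> bool" where
  "Cs x \<longleftrightarrow> (\<forall>i\<in>NI x. \<forall>j\<in>NI x. \<bar>x i - x j\<bar> \<le> 2*\<epsilon>) \<and> (\<forall>a\<in>ISO x. \<forall>j\<in>NI x. x a < x j - r)"
definition cube :: "(nat \<Rightarrow> real) \<Rightarrow> bool" where
  "cube x \<longleftrightarrow> (\<forall>i<n. 0 \<le> x i \<and> x i \<le> 1)"
definition mean :: "(nat \<Rightarrow> real) \<Rightarrow> real" where
  "mean x = (\<Sum>j<n. x j) / real n"
definition wz :: "(nat \<Rightarrow> real) \<Rightarrow> real" where
  "wz x = max (-P) (min P ((z - mean x) * real n / (real n - 1)))"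
definition strat :: "(nat \<Rightarrow> real) \<Rightarrow> nat \<Rightarrow> nat \<Rightarrow> real" where
  "strat x = (\<lambda>j i. if Zs x then wz x else if Cs x then -P else P)"
definition Nx :: "(nat \<Rightarrow> real) \<Rightarrow> (nat \<Rightarrow> real) \<Rightarrow> bool" where
  "Nx x x' \<longleftrightarrow> (\<exists>b. (\<forall>i<n. \<forall>j<n. j \<noteq> i \<longrightarrow> \<bar>b j i\<bar> \<le> \<epsilon>) \<and> x' = c4_step n (\<lambda>_. r) x (strat x) b)"

lemma r_pos: "r > 0"
proof -
  have "real n - 1 > 0" using n3 by simp
  hence "1 / (real n - 1) > 0" by simp
  thus ?thesis using rn by linarith
qed

lemma q_pos: "q > 0" and q_le_eta: "q \<le> \<eta>" and q_le_r: "q \<le> r"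
  using eta r_pos by (auto simp: q_def)

lemma eps_pos: "\<epsilon> > 0" and eps_q: "\<epsilon> \<le> q/16" and eps_alpha: "\<epsilon> < \<alpha>"
  using q_pos alpha by (auto simp: \<epsilon>_def)

lemma finite_nb: "finite (nb x i)" by (auto simp: nb_def nbrs_def)
lemma nb_iff: "j \<in> nb x i \<longleftrightarrow> j < n \<and> \<bar>x j - x i\<bar> \<le> r"
  by (auto simp: nb_def nbrs_def)

lemma step_strat:
  assumes i: "i < n" and b: "\<forall>i<n. \<forall>j<n. j \<noteq> i \<longrightarrow> \<bar>b j i\<bar> \<le> \<epsilon>"
    and w: "\<And>j. strat x j i = w"
  shows "\<exists>y. c4_step n (\<lambda>_. r) x (strat x) b i = proj01 y \<and>
     (\<Sum>j\<in>nb x i. x j) + (real (card (nb x i)) - 1) * (w - \<epsilon>) \<le> real (card (nb x i)) * y \<and>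
     real (card (nb x i)) * y \<le> (\<Sum>j\<in>nb x i. x j) + (real (card (nb x i)) - 1) * (w + \<epsilon>)"
  unfolding nb_def
  by (rule step_form) (use i b w r_pos in \<open>auto simp: nbrs_def\<close>)

lemma iso_nb: "i < n \<Longrightarrow> iso x i \<Longrightarrow> nb x i = {i}"
  using r_pos by (auto simp: iso_def nb_iff)

lemma step_iso:
  assumes "i < n" "iso x i" "0 \<le> x i" "x i \<le> 1"
  shows "c4_step n (\<lambda>_. r) x u b i = x i"
proof -
  have "nbrs n (\<lambda>_. r) x i = {i}" using iso_nb[OF assms(1,2)] by (simp add: nb_def)
  thus ?thesis using assms by (simp add: c4_step_def proj01_id)
qed

lemma Nx_cube: "Nx x x' \<Longrightarrow> cube x'"
  by (auto simp: Nx_def cube_def c4_step_def proj01_range)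

lemma Nx_iso: "Nx x x' \<Longrightarrow> cube x \<Longrightarrow> i < n \<Longrightarrow> iso x i \<Longrightarrow> x' i = x i"
  by (auto simp: Nx_def cube_def step_iso)


lemma box_bounds:
  fixes t :: real and N :: nat
  assumes "N \<ge> 2" "0 \<le> t" "t \<le> real N - 1"
  shows "real (min (N-2) (nat \<lfloor>t\<rfloor>)) \<le> t \<and> t \<le> real (min (N-2) (nat \<lfloor>t\<rfloor>)) + 1"
proof (cases "nat \<lfloor>t\<rfloor> \<le> N - 2")
  case True
  hence "min (N-2) (nat \<lfloor>t\<rfloor>) = nat \<lfloor>t\<rfloor>" by simp
  moreover have "real (nat \<lfloor>t\<rfloor>) = of_int \<lfloor>t\<rfloor>" using assms(2) by simp
  ultimately show ?thesis by (simp add: of_int_floor_le)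
next
  case False
  hence "min (N-2) (nat \<lfloor>t\<rfloor>) = N - 2" by simp
  moreover have "real (N - 2) = real N - 2" using assms(1) by simp
  moreover have "of_int \<lfloor>t\<rfloor> > real N - 2" using False assms by linarith
  moreover have "of_int \<lfloor>t\<rfloor> \<le> t" by simp
  ultimately show ?thesis using assms by linarith
qed

lemma NI_ne: assumes "cube x" shows "NI x \<noteq> {}"
proof
  assume e: "NI x = {}"
  hence all: "\<forall>i<n. iso x i" by (auto simp: NI_def)
  define f where "f i = min (n-2) (nat \<lfloor>x i * (real n - 1)\<rfloor>)" for i
  have "f ` {..<n} \<subseteq> {..<n-1}" using n3 by (auto simp: f_def)
  hence "card (f ` {..<n}) \<le> n - 1" by (metis card_lessThan card_mono finite_lessThan)
  hence "\<not> inj_on f {..<n}" using n3 card_image[of f "{..<n}"] by auto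
  then obtain i j where ij: "i < n" "j < n" "i \<noteq> j" "f i = f j" by (auto simp: inj_on_def)
  have m: "real n - 1 > 0" using n3 by simp
  have bi: "real (f i) \<le> x i * (real n - 1) \<and> x i * (real n - 1) \<le> real (f i) + 1"
    unfolding f_def by (rule box_bounds) (use n3 assms ij m in \<open>auto simp: cube_def mult_le_cancel_right1\<close>)
  have bj: "real (f j) \<le> x j * (real n - 1) \<and> x j * (real n - 1) \<le> real (f j) + 1"
    unfolding f_def by (rule box_bounds) (use n3 assms ij m in \<open>auto simp: cube_def mult_le_cancel_right1\<close>)
  have "\<bar>(x i - x j) * (real n - 1)\<bar> \<le> 1"
    using bi bj ij(4) unfolding abs_le_iff by (simp add: algebra_simps) 
  hence "\<bar>x i - x j\<bar> * (real n - 1) \<le> 1" using m by (simp add: abs_mult)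
  hence "\<bar>x i - x j\<bar> \<le> 1 / (real n - 1)" using m by (simp add: field_simps)
  hence "\<bar>x i - x j\<bar> \<le> r" using rn by linarith
  moreover have "r < \<bar>x i - x j\<bar>" using all ij unfolding iso_def by force
  ultimately show False by linarith
qed


definition sv :: "(nat \<Rightarrow> real) \<Rightarrow> real" where
  "sv x = (if Zs x then wz x else if Cs x then -P else P)"

lemma strat_sv: "strat x j i = sv x" by (simp add: strat_def sv_def)

lemma gen_step:
  assumes "Nx x x'" "i < n"
  shows "\<exists>y. x' i = proj01 y \<and>
     (\<Sum>j\<in>nb x i. x j) + (real (card (nb x i)) - 1) * (sv x - \<epsilon>) \<le> real (card (nb x i)) * y \<and>
     real (card (nb x i)) * y \<le> (\<Sum>j\<in>nb x i. x j) + (real (card (nb x i)) - 1) * (sv x + \<epsilon>)"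
proof -
  obtain b where b: "\<forall>i<n. \<forall>j<n. j \<noteq> i \<longrightarrow> \<bar>b j i\<bar> \<le> \<epsilon>" and x': "x' = c4_step n (\<lambda>_. r) x (strat x) b"
    using assms(1) by (auto simp: Nx_def)
  show ?thesis using step_strat[OF assms(2) b, of x "sv x"] x' by (simp add: strat_sv)
qed

lemma card_nb_ge1: "i < n \<Longrightarrow> real (card (nb x i)) \<ge> 1"
proof -
  assume i: "i < n"
  have "i \<in> nb x i" using i r_pos by (simp add: nb_iff)
  hence "card (nb x i) \<ge> 1" using finite_nb by (metis One_nat_def Suc_leI card_gt_0_iff empty_iff)
  thus ?thesis by simp
qed

lemma card_nb_ge2: "i < n \<Longrightarrow> \<not> iso x i \<Longrightarrow> real (card (nb x i)) \<ge> 2"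
proof -
  assume i: "i < n" and ni: "\<not> iso x i"
  then obtain j where j: "j < n" "j \<noteq> i" "\<bar>x j - x i\<bar> \<le> r" by (auto simp: iso_def not_less)
  have "{i, j} \<subseteq> nb x i" using i j r_pos by (auto simp: nb_iff)
  hence "card {i, j} \<le> card (nb x i)" using finite_nb by (rule card_mono[rotated])
  thus ?thesis using j by simp
qed

lemma sum_nb_ge: "(\<And>j. j \<in> nb x i \<Longrightarrow> c \<le> x j) \<Longrightarrow> real (card (nb x i)) * c \<le> (\<Sum>j\<in>nb x i. x j)"
proof -
  assume "\<And>j. j \<in> nb x i \<Longrightarrow> c \<le> x j"
  hence "(\<Sum>j\<in>nb x i. c) \<le> (\<Sum>j\<in>nb x i. x j)" by (rule sum_mono)
  thus ?thesis by simp
qed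

lemma sum_nb_le: "(\<And>j. j \<in> nb x i \<Longrightarrow> x j \<le> c) \<Longrightarrow> (\<Sum>j\<in>nb x i. x j) \<le> real (card (nb x i)) * c"
proof -
  assume "\<And>j. j \<in> nb x i \<Longrightarrow> x j \<le> c"
  hence "(\<Sum>j\<in>nb x i. x j) \<le> (\<Sum>j\<in>nb x i. c)" by (rule sum_mono)
  thus ?thesis by simp
qed

lemma gen_lower:
  assumes "Nx x x'" "i < n" "\<And>j. j \<in> nb x i \<Longrightarrow> c \<le> x j" "\<not> iso x i" "sv x - \<epsilon> \<ge> 0"
  shows "x' i \<ge> min 1 (c + (sv x - \<epsilon>)/2)"
proof -
  obtain y where y: "x' i = proj01 y" and lo: "(\<Sum>j\<in>nb x i. x j) + (real (card (nb x i)) - 1) * (sv x - \<epsilon>) \<le> real (card (nb x i)) * y"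
    using gen_step[OF assms(1,2)] by blast
  define k where "k = real (card (nb x i))"
  have k2: "k \<ge> 2" using card_nb_ge2[OF assms(2,4)] by (simp add: k_def)
  have S: "k * c \<le> (\<Sum>j\<in>nb x i. x j)" using sum_nb_ge[of x i c] assms(3) by (simp add: k_def)
  have "(k - 1) * (sv x - \<epsilon>) \<ge> k * ((sv x - \<epsilon>)/2)"
  proof -
    have "(k/2 - 1) * (sv x - \<epsilon>) \<ge> 0" using k2 assms(5) by simp
    moreover have "(k - 1) * (sv x - \<epsilon>) - k * ((sv x - \<epsilon>)/2) = (k/2 - 1) * (sv x - \<epsilon>)"
      by (simp add: field_simps)
    ultimately show ?thesis by linarith
  qed
  hence "k * (c + (sv x - \<epsilon>)/2) \<le> k * y" using S lo unfolding k_def[symmetric] by (simp add: algebra_simps)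
  hence "c + (sv x - \<epsilon>)/2 \<le> y" using k2 by simp
  thus ?thesis using y proj01_ge[of y] by linarith
qed


lemma gen_upper:
  assumes "Nx x x'" "i < n" "\<And>j. j \<in> nb x i \<Longrightarrow> x j \<le> c" "\<not> iso x i" "sv x + \<epsilon> \<le> 0"
  shows "x' i \<le> max 0 (c + (sv x + \<epsilon>)/2)"
proof -
  obtain y where y: "x' i = proj01 y" and hi: "real (card (nb x i)) * y \<le> (\<Sum>j\<in>nb x i. x j) + (real (card (nb x i)) - 1) * (sv x + \<epsilon>)"
    using gen_step[OF assms(1,2)] by blast
  define k where "k = real (card (nb x i))"
  have k2: "k \<ge> 2" using card_nb_ge2[OF assms(2,4)] by (simp add: k_def)
  have S: "(\<Sum>j\<in>nb x i. x j) \<le> k * c" using sum_nb_le[of x i c] assms(3) by (simp add: k_def)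
  have "(k - 1) * (sv x + \<epsilon>) \<le> k * ((sv x + \<epsilon>)/2)"
  proof -
    have "(k/2 - 1) * (sv x + \<epsilon>) \<le> 0" using k2 assms(5) by (simp add: mult_nonneg_nonpos)
    moreover have "(k - 1) * (sv x + \<epsilon>) - k * ((sv x + \<epsilon>)/2) = (k/2 - 1) * (sv x + \<epsilon>)"
      by (simp add: field_simps)
    ultimately show ?thesis by linarith
  qed
  moreover have "k * (c + (sv x + \<epsilon>)/2) = k*c + k*((sv x + \<epsilon>)/2)" by (simp add: distrib_left)
  ultimately have "k * y \<le> k * (c + (sv x + \<epsilon>)/2)" using S hi unfolding k_def[symmetric] by linarith
  hence "y \<le> c + (sv x + \<epsilon>)/2" using k2 by simp
  thus ?thesis using y proj01_le[of y] by linarith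
qed

lemma gen_lower2:
  assumes "Nx x x'" "i < n" "\<And>j. j \<in> nb x i \<Longrightarrow> c \<le> x j" "sv x - \<epsilon> \<le> 0"
  shows "x' i \<ge> min 1 (c + (sv x - \<epsilon>))"
proof -
  obtain y where y: "x' i = proj01 y" and lo: "(\<Sum>j\<in>nb x i. x j) + (real (card (nb x i)) - 1) * (sv x - \<epsilon>) \<le> real (card (nb x i)) * y"
    using gen_step[OF assms(1,2)] by blast
  define k where "k = real (card (nb x i))"
  have k1: "k \<ge> 1" using card_nb_ge1[OF assms(2)] by (simp add: k_def)
  have S: "k * c \<le> (\<Sum>j\<in>nb x i. x j)" using sum_nb_ge[of x i c] assms(3) by (simp add: k_def)
  have "(k - 1) * (sv x - \<epsilon>) \<ge> k * (sv x - \<epsilon>)" using assms(4) by (simp add: algebra_simps)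
  hence "k * (c + (sv x - \<epsilon>)) \<le> k * y" using S lo unfolding k_def[symmetric] by (simp add: algebra_simps)
  hence "c + (sv x - \<epsilon>) \<le> y" using k1 by simp
  thus ?thesis using y proj01_ge[of y] by linarith
qed

lemma gen_pair:
  assumes "Nx x x'" "i < n" "i' < n" "nb x i = nb x i'"
  shows "\<bar>x' i - x' i'\<bar> \<le> 2 * \<epsilon>"
proof -
  obtain y where y: "x' i = proj01 y" and lo: "(\<Sum>j\<in>nb x i. x j) + (real (card (nb x i)) - 1) * (sv x - \<epsilon>) \<le> real (card (nb x i)) * y"
     and hi: "real (card (nb x i)) * y \<le> (\<Sum>j\<in>nb x i. x j) + (real (card (nb x i)) - 1) * (sv x + \<epsilon>)"
    using gen_step[OF assms(1,2)] by blast
  obtain y' where y': "x' i' = proj01 y'" and lo': "(\<Sum>j\<in>nb x i. x j) + (real (card (nb x i)) - 1) * (sv x - \<epsilon>) \<le> real (card (nb x i)) * y'"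
     and hi': "real (card (nb x i)) * y' \<le> (\<Sum>j\<in>nb x i. x j) + (real (card (nb x i)) - 1) * (sv x + \<epsilon>)"
    using gen_step[OF assms(1,3)] assms(4) by metis
  define k where "k = real (card (nb x i))"
  have k1: "k \<ge> 1" using card_nb_ge1[OF assms(2)] by (simp add: k_def)
  have "k * (y - y') \<le> (k - 1) * (2 * \<epsilon>)" "k * (y' - y) \<le> (k - 1) * (2 * \<epsilon>)"
    using lo hi lo' hi' unfolding k_def[symmetric] by (simp_all add: algebra_simps)
  moreover have "(k - 1) * (2 * \<epsilon>) \<le> k * (2 * \<epsilon>)" using eps_pos by simp
  ultimately have "k * (y - y') \<le> k * (2 * \<epsilon>)" "k * (y' - y) \<le> k * (2 * \<epsilon>)" by linarith+
  hence "y - y' \<le> 2 * \<epsilon>" "y' - y \<le> 2 * \<epsilon>" using k1 by simp_all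
  hence "\<bar>y - y'\<bar> \<le> 2 * \<epsilon>" by simp
  thus ?thesis using y y' proj01_lip[of y y'] by linarith
qed


lemma P_facts: "P - \<epsilon> \<ge> 0" "(P - \<epsilon>)/2 \<ge> \<gamma>" "\<gamma> > 0" "\<gamma> \<le> r/8" "2 * \<epsilon> \<le> r/8"
  "P + \<epsilon> \<le> 9/16 * r" "P \<le> \<eta> - \<epsilon>"
  using eps_q q_pos q_le_r q_le_eta eps_pos by (auto simp: P_def \<gamma>_def)

lemma sv_up: "\<not> Zs x \<Longrightarrow> \<not> Cs x \<Longrightarrow> sv x = P" by (simp add: sv_def)
lemma sv_down: "\<not> Zs x \<Longrightarrow> Cs x \<Longrightarrow> sv x = -P" by (simp add: sv_def)

definition Lm :: "(nat \<Rightarrow> real) \<Rightarrow> real" where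
  "Lm x = Min (x ` NI x)"

lemma finite_NI: "finite (NI x)" by (auto simp: NI_def)

lemma Lm_le: "i \<in> NI x \<Longrightarrow> Lm x \<le> x i"
  unfolding Lm_def using finite_NI by simp

lemma Lm_in: "cube x \<Longrightarrow> \<exists>a\<in>NI x. x a = Lm x"
  unfolding Lm_def using finite_NI NI_ne
  by (metis (no_types, lifting) Min_in empty_is_image finite_imageI imageE)

lemma Lm_ge: "cube x \<Longrightarrow> (\<And>i. i \<in> NI x \<Longrightarrow> c \<le> x i) \<Longrightarrow> c \<le> Lm x"
  using Lm_in by metis

lemma NI_nb: "j \<in> NI x \<Longrightarrow> l \<in> nb x j \<Longrightarrow> l \<in> NI x"
  by (cases "l = j") (auto simp: NI_def nb_iff iso_def not_less abs_minus_commute)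

lemma iso_not_nb: "j < n \<Longrightarrow> iso x a \<Longrightarrow> a \<in> nb x j \<Longrightarrow> a = j"
  unfolding nb_iff iso_def by (metis abs_minus_commute not_less)

lemma up_L:
  assumes c: "cube x" and N: "Nx x x'" and nz: "\<not> Zs x" and nc: "\<not> Cs x"
  shows "Lm x' \<ge> min 1 (Lm x + \<gamma>)"
proof -
  have sv: "sv x = P" using sv_up[OF nz nc] .
  have c': "cube x'" using Nx_cube[OF N] .
  have A: "x' l \<ge> min 1 (Lm x + \<gamma>)" if l: "l \<in> NI x" for l
  proof -
    have "l < n" "\<not> iso x l" using l by (auto simp: NI_def)
    have "x' l \<ge> min 1 (Lm x + (sv x - \<epsilon>)/2)"
      by (rule gen_lower[OF N \<open>l < n\<close> _ \<open>\<not> iso x l\<close>]) (use NI_nb[OF l] Lm_le sv P_facts in auto)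
    thus ?thesis using sv P_facts by (smt (verit))
  qed
  obtain a where a: "a \<in> NI x" "x a = Lm x" using Lm_in[OF c] by blast
  show ?thesis
  proof (rule Lm_ge[OF c'])
    fix j assume j: "j \<in> NI x'"
    hence jn: "j < n" by (auto simp: NI_def)
    show "min 1 (Lm x + \<gamma>) \<le> x' j"
    proof (cases "iso x j")
      case False thus ?thesis using A jn by (auto simp: NI_def)
    next
      case True
      have xj: "x' j = x j" using Nx_iso[OF N c jn True] .
      have ajn: "a \<noteq> j" using a True by (auto simp: NI_def)
      have "a < n" using a by (auto simp: NI_def)
      hence far: "r < \<bar>x a - x j\<bar>" using True ajn by (auto simp: iso_def)
      show ?thesis
      proof (cases "x j > x a")
        case True thus ?thesis using far a xj P_facts by auto
      next
        case False
        hence low: "x j < Lm x - r" using far a by auto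
        have Lm1: "Lm x \<le> 1" using a c \<open>a < n\<close> by (auto simp: cube_def)
        have "iso x' j" unfolding iso_def
        proof (intro allI impI)
          fix l assume l: "l < n" "l \<noteq> j"
          show "r < \<bar>x' l - x' j\<bar>"
          proof (cases "iso x l")
            case True
            hence "x' l = x l" using Nx_iso[OF N c l(1)] by simp
            moreover have "r < \<bar>x l - x j\<bar>" using \<open>iso x j\<close> l by (auto simp: iso_def)
            ultimately show ?thesis using xj by simp
          next
            case False
            hence "x' l \<ge> min 1 (Lm x + \<gamma>)" using A l by (auto simp: NI_def)
            thus ?thesis using xj low Lm1 P_facts by auto
          qed
        qed
        thus ?thesis using j by (auto simp: NI_def)
      qed
    qed
  qed
qed

lemma Lm_term: assumes "cube x" "Lm x \<ge> 1" shows "Cs x"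
proof -
  have one: "x i = 1" if "i \<in> NI x" for i
    using Lm_le[OF that] assms that by (force simp: cube_def NI_def)
  show ?thesis unfolding Cs_def
  proof (intro conjI ballI)
    fix i j assume "i \<in> NI x" "j \<in> NI x"
    thus "\<bar>x i - x j\<bar> \<le> 2 * \<epsilon>" using one eps_pos by simp
  next
    fix a j assume a: "a \<in> ISO x" and j: "j \<in> NI x"
    hence "a \<noteq> j" "j < n" "iso x a" "a < n" by (auto simp: ISO_def NI_def)
    hence "r < \<bar>x j - x a\<bar>" by (auto simp: iso_def)
    moreover have "x a \<le> 1" using \<open>a < n\<close> assms by (auto simp: cube_def)
    ultimately show "x a < x j - r" using one[OF j] by auto
  qed
qed

lemma Lm_nonneg: "cube x \<Longrightarrow> 0 \<le> Lm x"
  by (rule Lm_ge) (auto simp: cube_def NI_def)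


lemma least_ex:
  assumes "\<exists>t\<le>(N::nat). Q t"
  shows "\<exists>t\<le>N. Q t \<and> (\<forall>s<t. \<not> Q s)"
proof -
  define t where "t = (LEAST t. t \<le> N \<and> Q t)"
  have t12: "t \<le> N \<and> Q t" unfolding t_def using assms by (rule LeastI_ex)
  have t3: "\<forall>s<t. \<not> Q s"
  proof (intro allI impI)
    fix s assume "s < t"
    hence "\<not> (s \<le> N \<and> Q s)" unfolding t_def by (rule not_less_Least)
    thus "\<not> Q s" using \<open>s < t\<close> t12 by auto
  qed
  show ?thesis using t12 t3 by blast
qed

lemma min_step: "min 1 a \<le> b \<Longrightarrow> (g::real) > 0 \<Longrightarrow> min 1 (a + g) \<le> min 1 (b + g)"
  by (simp add: min_def split: if_splits)

definition IU :: "nat set \<Rightarrow> (nat \<Rightarrow> real) \<Rightarrow> real \<Rightarrow> (nat \<Rightarrow> real) \<Rightarrow> bool" where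
  "IU F v c x \<longleftrightarrow> cube x \<and> (\<forall>a\<in>F. a < n \<and> iso x a \<and> x a = v a) \<and> (\<forall>j<n. j \<notin> F \<longrightarrow> c \<le> x j)"

definition SU :: "nat set \<Rightarrow> (nat \<Rightarrow> real) \<Rightarrow> real \<Rightarrow> bool" where
  "SU F v c \<longleftrightarrow> (\<forall>a\<in>F. v a < c - r) \<and> c \<le> 1"

lemma up_inv:
  assumes I: "IU F v c x" and S: "SU F v c" and N: "Nx x x'" and nz: "\<not> Zs x" and nc: "\<not> Cs x"
  shows "IU F v c x'"
proof -
  have sv: "sv x = P" using sv_up[OF nz nc] .
  have cx: "cube x" using I by (simp add: IU_def)
  have nonF: "c \<le> x' j" if j: "j < n" "j \<notin> F" for j
  proof (cases "iso x j")
    case True thus ?thesis using Nx_iso[OF N cx j(1)] I j by (simp add: IU_def)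
  next
    case False
    have "x' j \<ge> min 1 (c + (sv x - \<epsilon>)/2)"
    proof (rule gen_lower[OF N j(1) _ False])
      fix l assume l: "l \<in> nb x j"
      have "l \<notin> F" using iso_not_nb[OF j(1) _ l] I False by (auto simp: IU_def)
      thus "c \<le> x l" using l I by (auto simp: IU_def nb_iff)
    qed (use sv P_facts in auto)
    moreover have "c \<le> 1" using S by (simp add: SU_def)
    hence "c \<le> min 1 (c + (sv x - \<epsilon>)/2)" using sv P_facts(1) by simp
    ultimately show ?thesis by linarith
  qed
  have Fpart: "a < n \<and> iso x' a \<and> x' a = v a" if a: "a \<in> F" for a
  proof -
    have an: "a < n" "iso x a" "x a = v a" using I a by (auto simp: IU_def)
    have xa: "x' a = v a" using Nx_iso[OF N cx an(1,2)] an by simp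
    have "iso x' a" unfolding iso_def
    proof (intro allI impI)
      fix l assume l: "l < n" "l \<noteq> a"
      show "r < \<bar>x' l - x' a\<bar>"
      proof (cases "l \<in> F")
        case True
        hence "x' l = x l" "iso x l" using I Nx_iso[OF N cx l(1)] by (auto simp: IU_def)
        moreover have "r < \<bar>x l - x a\<bar>" using an l by (auto simp: iso_def)
        ultimately show ?thesis using xa an by simp
      next
        case False
        thus ?thesis using nonF[OF l(1) False] xa S a by (auto simp: SU_def)
      qed
    qed
    thus ?thesis using an xa by simp
  qed
  show ?thesis using Nx_cube[OF N] nonF Fpart by (auto simp: IU_def)
qed

definition "NU = nat \<lceil>1/\<gamma>\<rceil> + 1"

lemma NU_ge: "real NU * \<gamma> \<ge> 1"
proof -
  have "real NU \<ge> 1/\<gamma>" unfolding NU_def by linarith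
  thus ?thesis using P_facts(3) by (simp add: field_simps)
qed

lemma up_phase:
  assumes S: "SU F v c" and I0: "IU F v c (y 0)" and N: "\<forall>t<NU. Nx (y t) (y (Suc t))"
  shows "\<exists>t\<le>NU. (Cs (y t) \<or> Zs (y t)) \<and> IU F v c (y t)"
proof -
  have claim: "k \<le> NU \<longrightarrow> (\<forall>t<k. \<not> Cs (y t) \<and> \<not> Zs (y t)) \<longrightarrow> IU F v c (y k) \<and> Lm (y k) \<ge> min 1 (real k * \<gamma>)" for k
  proof (induction k)
    case 0 thus ?case using I0 Lm_nonneg by (simp add: IU_def)
  next
    case (Suc k)
    show ?case
    proof (intro impI)
      assume k: "Suc k \<le> NU" and h: "\<forall>t<Suc k. \<not> Cs (y t) \<and> \<not> Zs (y t)"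
      hence IH: "IU F v c (y k)" "Lm (y k) \<ge> min 1 (real k * \<gamma>)" using Suc by auto
      have Nk: "Nx (y k) (y (Suc k))" using N k by simp
      have hk: "\<not> Cs (y k)" "\<not> Zs (y k)" using h by auto
      have "IU F v c (y (Suc k))" using up_inv[OF IH(1) S Nk hk(2,1)] .
      moreover have "Lm (y (Suc k)) \<ge> min 1 (Lm (y k) + \<gamma>)"
        using up_L[OF _ Nk hk(2,1)] IH(1) by (simp add: IU_def)
      moreover have "min 1 (Lm (y k) + \<gamma>) \<ge> min 1 (real (Suc k) * \<gamma>)"
      proof -
        have e: "real (Suc k) * \<gamma> = real k * \<gamma> + \<gamma>" by (simp add: algebra_simps)
        show ?thesis unfolding e by (rule min_step[OF IH(2) P_facts(3)])
      qed
      ultimately show "IU F v c (y (Suc k)) \<and> min 1 (real (Suc k) * \<gamma>) \<le> Lm (y (Suc k))" by linarith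
    qed
  qed
  show ?thesis
  proof (cases "\<exists>t\<le>NU. Cs (y t) \<or> Zs (y t)")
    case True
    define t where "t = (LEAST t. t \<le> NU \<and> (Cs (y t) \<or> Zs (y t)))"
    have t12: "t \<le> NU \<and> (Cs (y t) \<or> Zs (y t))" unfolding t_def using True by (rule LeastI_ex)
    have t3: "\<forall>s<t. \<not> (Cs (y s) \<or> Zs (y s))"
    proof (intro allI impI)
      fix s assume "s < t"
      hence "\<not> (s \<le> NU \<and> (Cs (y s) \<or> Zs (y s)))" unfolding t_def by (rule not_less_Least)
      thus "\<not> (Cs (y s) \<or> Zs (y s))" using \<open>s < t\<close> t12 by auto
    qed
    have t: "t \<le> NU" "Cs (y t) \<or> Zs (y t)" "\<forall>s<t. \<not> (Cs (y s) \<or> Zs (y s))" using t12 t3 by auto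
    hence "IU F v c (y t)" using claim[of t] by auto
    thus ?thesis using t by blast
  next
    case False
    hence "IU F v c (y NU) \<and> Lm (y NU) \<ge> min 1 (real NU * \<gamma>)" using claim[of NU] by auto
    hence "Cs (y NU)" using NU_ge Lm_term by (auto simp: IU_def)
    thus ?thesis using False by auto
  qed
qed


lemma up_gain:
  assumes I: "IU F v c x" and N: "Nx x x'" and nz: "\<not> Zs x" and nc: "\<not> Cs x"
    and j: "j < n" "j \<notin> F" "\<not> iso x j"
  shows "x' j \<ge> min 1 (c + \<gamma>)"
proof -
  have sv: "sv x = P" using sv_up[OF nz nc] .
  have "x' j \<ge> min 1 (c + (sv x - \<epsilon>)/2)"
  proof (rule gen_lower[OF N j(1) _ j(3)])
    fix l assume l: "l \<in> nb x j"
    have "l \<notin> F" using iso_not_nb[OF j(1) _ l] I j by (auto simp: IU_def)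
    thus "c \<le> x l" using l I by (auto simp: IU_def nb_iff)
  qed (use sv P_facts in auto)
  moreover have "c + \<gamma> \<le> c + (sv x - \<epsilon>)/2" using sv P_facts(2) by simp
  hence "min 1 (c + (sv x - \<epsilon>)/2) \<ge> min 1 (c + \<gamma>)" by (rule min.mono[OF order_refl])
  ultimately show ?thesis by linarith
qed

lemma notZ_ISO: "Cs x \<Longrightarrow> \<not> Zs x \<Longrightarrow> ISO x \<noteq> {}"
proof -
  assume C: "Cs x" and nz: "\<not> Zs x"
  { assume e: "ISO x = {}"
    have "Zs x" unfolding Zs_def
    proof (intro allI impI)
      fix i j assume "i < n" "j < n"
      hence "i \<in> NI x" "j \<in> NI x" using e by (auto simp: ISO_def NI_def)
      thus "\<bar>x i - x j\<bar> \<le> r" using C P_facts(5) eps_pos unfolding Cs_def by fastforce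
    qed }
  thus ?thesis using nz by blast
qed

lemma finite_ISO: "finite (ISO x)" unfolding ISO_def by (rule finite_subset[of _ "{..<n}"]) auto

context
  fixes x0 :: "nat \<Rightarrow> real" and top :: nat
  assumes c0: "cube x0" and C0: "Cs x0" and Z0: "\<not> Zs x0" and top: "top \<in> ISO x0"
    and topmax: "\<forall>a\<in>ISO x0. x0 a \<le> x0 top"
begin

abbreviation "F1 \<equiv> ISO x0 - {top}"
abbreviation "AA \<equiv> NI x0"

lemma f1: "a \<in> F1 \<Longrightarrow> x0 a < (x0 top) - r"
proof -
  assume a: "a \<in> F1"
  hence "iso x0 a" "top < n" "top \<noteq> a" "x0 a \<le> (x0 top)" using top topmax by (auto simp: ISO_def)
  hence "r < \<bar>x0 top - x0 a\<bar>" by (auto simp: iso_def)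
  thus ?thesis using \<open>x0 a \<le> (x0 top)\<close> by auto
qed

lemma f2: "j \<in> AA \<Longrightarrow> x0 j > (x0 top) + r"
proof -
  assume "j \<in> AA"
  hence "x0 top < x0 j - r" using C0 top unfolding Cs_def by blast
  thus ?thesis by simp
qed

lemma f4: "i \<in> AA \<Longrightarrow> \<exists>j\<in>AA. j \<noteq> i"
proof -
  assume i: "i \<in> AA"
  then obtain j where j: "j < n" "j \<noteq> i" "\<bar>x0 j - x0 i\<bar> \<le> r" by (auto simp: NI_def iso_def not_less)
  have "j \<in> nb x0 i" using j by (simp add: nb_iff)
  thus ?thesis using NI_nb[OF i] j by blast
qed

lemma f5: "(x0 top) + r < 1"
proof -
  obtain j where "j \<in> AA" using NI_ne[OF c0] by blast
  hence "x0 j > (x0 top) + r" "x0 j \<le> 1" using f2 c0 by (auto simp: cube_def NI_def)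
  thus ?thesis by linarith
qed

lemma partition: "j < n \<Longrightarrow> j \<in> F1 \<or> j = top \<or> j \<in> AA"
  by (auto simp: ISO_def NI_def)

lemma topn: "top < n" using top by (simp add: ISO_def)

definition ID :: "(nat \<Rightarrow> real) \<Rightarrow> bool" where
  "ID x \<longleftrightarrow> cube x \<and> (\<forall>a\<in>F1. iso x a \<and> x a = x0 a) \<and> x top = (x0 top) \<and>
     (\<forall>j\<in>AA. (x0 top) + r/4 \<le> x j) \<and> (\<forall>i\<in>AA. \<forall>j\<in>AA. \<bar>x i - x j\<bar> \<le> 2*\<epsilon>)"

lemma ID0: "ID x0"
  unfolding ID_def using c0 f2 C0 r_pos top by (force simp: ISO_def Cs_def)

lemma ID_AA_niso: "ID x \<Longrightarrow> i \<in> AA \<Longrightarrow> \<not> iso x i"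
proof -
  assume I: "ID x" and i: "i \<in> AA"
  obtain j where j: "j \<in> AA" "j \<noteq> i" using f4[OF i] by blast
  have "\<bar>x j - x i\<bar> \<le> r" using I i j P_facts(5) eps_pos unfolding ID_def by fastforce
  thus ?thesis using j by (auto simp: iso_def NI_def)
qed

lemma D1:
  assumes I: "ID x" and C: "Cs x"
  shows "iso x top" "\<And>i. i \<in> AA \<Longrightarrow> nb x i = AA" "\<And>j. j \<in> AA \<Longrightarrow> x j > (x0 top) + r"
proof -
  obtain j0 where j0: "j0 \<in> AA" using NI_ne[OF c0] by blast
  have j0n: "j0 \<in> NI x" using ID_AA_niso[OF I j0] j0 by (auto simp: NI_def)
  show ti: "iso x top"
  proof (rule ccontr)
    assume "\<not> iso x top"
    hence "top \<in> NI x" using topn by (simp add: NI_def)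
    hence "\<bar>x top - x j0\<bar> \<le> 2*\<epsilon>" using C j0n by (auto simp: Cs_def)
    moreover have "x j0 \<ge> (x0 top) + r/4" "x top = (x0 top)" using I j0 by (auto simp: ID_def)
    ultimately show False using P_facts(5) eps_pos by auto
  qed
  show "nb x i = AA" if i: "i \<in> AA" for i
  proof
    show "nb x i \<subseteq> AA"
    proof
      fix l assume l: "l \<in> nb x i"
      have i_n: "i < n" using i by (simp add: NI_def)
      have "l < n" using l by (simp add: nb_iff)
      moreover have "l \<notin> F1" using iso_not_nb[OF i_n _ l] I i by (auto simp: ID_def NI_def ISO_def)
      moreover have "l \<noteq> top" using iso_not_nb[OF i_n ti] l i top by (auto simp: NI_def ISO_def)
      ultimately show "l \<in> AA" using partition by blast
    qed
  next
    show "AA \<subseteq> nb x i"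
      using I i P_facts(5) eps_pos unfolding ID_def by (force simp: nb_iff NI_def abs_minus_commute)
  qed
  show "x j > (x0 top) + r" if j: "j \<in> AA" for j
  proof -
    have "top \<in> ISO x" using ti topn by (simp add: ISO_def)
    moreover have "j \<in> NI x" using ID_AA_niso[OF I j] j by (auto simp: NI_def)
    ultimately have "x top < x j - r" using C by (auto simp: Cs_def)
    thus ?thesis using I by (simp add: ID_def)
  qed
qed


lemma D2:
  assumes I: "ID x" and C: "Cs x" and nz: "\<not> Zs x" and N: "Nx x x'" and M: "\<forall>j\<in>AA. x j \<le> M"
  shows "ID x' \<and> (\<forall>j\<in>AA. x' j \<le> M - \<gamma>)"
proof -
  have sv: "sv x = -P" using sv_down[OF nz C] .
  have cx: "cube x" using I by (simp add: ID_def)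
  have ti: "iso x top" using D1(1)[OF I C] .
  have xtop: "x' top = (x0 top)" using Nx_iso[OF N cx topn ti] I by (simp add: ID_def)
  have lowA: "(x0 top) + r/4 \<le> x' j" if j: "j \<in> AA" for j
  proof -
    have jn: "j < n" using j by (simp add: NI_def)
    have "x' j \<ge> min 1 (((x0 top) + r) + (sv x - \<epsilon>))"
      by (rule gen_lower2[OF N jn]) (use D1(2)[OF I C j] D1(3)[OF I C] sv P_facts eps_pos in \<open>auto simp: less_eq_real_def\<close>)
    moreover have "(x0 top) + r/4 \<le> min 1 (((x0 top) + r) + (sv x - \<epsilon>))" using sv P_facts f5 r_pos by simp
    ultimately show ?thesis by linarith
  qed
  have upA: "x' j \<le> M - \<gamma>" if j: "j \<in> AA" for j
  proof -
    have jn: "j < n" using j by (simp add: NI_def)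
    have "x' j \<le> max 0 (M + (sv x + \<epsilon>)/2)"
      by (rule gen_upper[OF N jn]) (use D1(2)[OF I C j] M ID_AA_niso[OF I j] sv P_facts eps_pos in auto)
    moreover have "(sv x + \<epsilon>)/2 \<le> - \<gamma>" using sv P_facts(2) by simp
    moreover have "x' j > 0" using lowA[OF j] c0 topn r_pos by (auto simp: cube_def)
    ultimately show ?thesis by linarith
  qed
  have spread: "\<bar>x' i - x' j\<bar> \<le> 2*\<epsilon>" if "i \<in> AA" "j \<in> AA" for i j
  proof -
    have "nb x i = nb x j" using D1(2)[OF I C that(1)] D1(2)[OF I C that(2)] by simp
    moreover have "i < n" "j < n" using that by (auto simp: NI_def)
    ultimately show ?thesis using gen_pair[OF N] by blast
  qed
  have Fp: "iso x' a \<and> x' a = x0 a" if a: "a \<in> F1" for a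
  proof -
    have an: "a < n" "iso x a" "x a = x0 a" using I a by (auto simp: ID_def ISO_def)
    have xa: "x' a = x0 a" using Nx_iso[OF N cx an(1,2)] an by simp
    have "iso x' a" unfolding iso_def
    proof (intro allI impI)
      fix l assume l: "l < n" "l \<noteq> a"
      consider "l \<in> F1" | "l = top" | "l \<in> AA" using partition[OF l(1)] by blast
      thus "r < \<bar>x' l - x' a\<bar>"
      proof cases
        case 1
        hence "x' l = x0 l" using I Nx_iso[OF N cx l(1)] by (auto simp: ID_def)
        moreover have "iso x0 a" using a by (simp add: ISO_def)
        hence "r < \<bar>x0 l - x0 a\<bar>" using l by (auto simp: iso_def)
        ultimately show ?thesis using xa by simp
      next
        case 2 thus ?thesis using xtop xa f1[OF a] by auto
      next
        case 3 thus ?thesis using lowA[OF 3] xa f1[OF a] r_pos by auto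
      qed
    qed
    thus ?thesis using xa by simp
  qed
  show ?thesis unfolding ID_def using Nx_cube[OF N] Fp xtop lowA spread upA by blast
qed

lemma D3:
  assumes I: "ID x" and nc: "\<not> Cs x"
  shows "\<not> iso x top"
proof
  assume ti: "iso x top"
  have niA: "i \<in> AA" if "i \<in> NI x" for i
  proof -
    have "i < n" "\<not> iso x i" using that by (auto simp: NI_def)
    moreover have "i \<notin> F1" using I \<open>\<not> iso x i\<close> by (auto simp: ID_def)
    moreover have "i \<noteq> top" using ti \<open>\<not> iso x i\<close> by auto
    ultimately show ?thesis using partition by blast
  qed
  have isA: "a \<in> F1 \<or> a = top" if "a \<in> ISO x" for a
    using that partition ID_AA_niso[OF I] by (auto simp: ISO_def)
  have "Cs x" unfolding Cs_def
  proof (intro conjI ballI)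
    fix i j assume "i \<in> NI x" "j \<in> NI x"
    thus "\<bar>x i - x j\<bar> \<le> 2*\<epsilon>" using niA I by (auto simp: ID_def)
  next
    fix a j assume a: "a \<in> ISO x" and j: "j \<in> NI x"
    have jA: "j \<in> AA" using niA[OF j] .
    have lj: "(x0 top) + r/4 \<le> x j" using I jA by (simp add: ID_def)
    consider "a \<in> F1" | "a = top" using isA[OF a] by blast
    thus "x a < x j - r"
    proof cases
      case 1 thus ?thesis using I f1[OF 1] lj r_pos by (auto simp: ID_def)
    next
      case 2
      have "j < n" "j \<noteq> top" using j ti by (auto simp: NI_def)
      hence "r < \<bar>x j - x top\<bar>" using ti by (auto simp: iso_def)
      moreover have "x top = (x0 top)" using I by (simp add: ID_def)
      ultimately show ?thesis using 2 lj r_pos by auto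
    qed
  qed
  thus False using nc by simp
qed

lemma D4:
  assumes I: "ID x" and nc: "\<not> Cs x" and nz: "\<not> Zs x" and N: "Nx x x'"
  shows "IU F1 x0 ((x0 top) + \<gamma>) x'"
proof -
  have Ia: "\<forall>a\<in>F1. a < n \<and> iso x a \<and> x a = x0 a" using I by (auto simp: ID_def ISO_def)
  have Ib: "\<forall>j<n. j \<notin> F1 \<longrightarrow> (x0 top) \<le> x j"
  proof (intro allI impI)
    fix j assume j: "j < n" "j \<notin> F1"
    hence "j = top \<or> j \<in> AA" using partition by blast
    thus "(x0 top) \<le> x j"
    proof
      assume "j = top" thus ?thesis using I by (simp add: ID_def)
    next
      assume "j \<in> AA" hence "(x0 top) + r/4 \<le> x j" using I by (simp add: ID_def)
      thus ?thesis using r_pos by linarith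
    qed
  qed
  have I0: "IU F1 x0 (x0 top) x" unfolding IU_def using Ia Ib I by (simp add: ID_def)
  have S0: "SU F1 x0 (x0 top)" using f1 f5 r_pos by (auto simp: SU_def)
  have I1: "IU F1 x0 (x0 top) x'" using up_inv[OF I0 S0 N nz nc] .
  have g: "(x0 top) + \<gamma> \<le> 1" using f5 P_facts by simp
  have nonF: "(x0 top) + \<gamma> \<le> x' j" if j: "j < n" "j \<notin> F1" for j
  proof -
    have "\<not> iso x j"
    proof (cases "j = top")
      case True thus ?thesis using D3[OF I nc] by simp
    next
      case False hence "j \<in> AA" using partition[OF j(1)] j(2) by blast
      thus ?thesis using ID_AA_niso[OF I] by blast
    qed
    hence "x' j \<ge> min 1 ((x0 top) + \<gamma>)" using up_gain[OF I0 N nz nc j] by blast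
    thus ?thesis using g by simp
  qed
  show ?thesis using I1 nonF by (auto simp: IU_def)
qed


lemma round:
  assumes N: "\<forall>t<NU + 1 + NU. Nx (y t) (y (Suc t))" and y0: "y 0 = x0"
  shows "\<exists>t\<le>NU + 1 + NU. cube (y t) \<and> (Zs (y t) \<or> (Cs (y t) \<and> IU F1 x0 ((x0 top) + \<gamma>) (y t)))"
proof -
  have claim: "k \<le> NU \<longrightarrow> (\<forall>t<k. Cs (y t) \<and> \<not> Zs (y t)) \<longrightarrow> ID (y k) \<and> (\<forall>j\<in>AA. y k j \<le> 1 - real k * \<gamma>)" for k
  proof (induction k)
    case 0 thus ?case using ID0 y0 c0 by (auto simp: cube_def NI_def)
  next
    case (Suc k)
    show ?case
    proof (intro impI)
      assume k: "Suc k \<le> NU" and h: "\<forall>t<Suc k. Cs (y t) \<and> \<not> Zs (y t)"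
      hence IH: "ID (y k)" "\<forall>j\<in>AA. y k j \<le> 1 - real k * \<gamma>" using Suc by auto
      have Nk: "Nx (y k) (y (Suc k))" using N k by simp
      have hk: "Cs (y k)" "\<not> Zs (y k)" using h by auto
      have "ID (y (Suc k)) \<and> (\<forall>j\<in>AA. y (Suc k) j \<le> (1 - real k * \<gamma>) - \<gamma>)"
        using D2[OF IH(1) hk Nk IH(2)] .
      thus "ID (y (Suc k)) \<and> (\<forall>j\<in>AA. y (Suc k) j \<le> 1 - real (Suc k) * \<gamma>)"
        by (simp add: algebra_simps)
    qed
  qed
  have ex: "\<exists>t\<le>NU. \<not> (Cs (y t) \<and> \<not> Zs (y t))"
  proof (rule ccontr)
    assume "\<not> ?thesis"
    hence "ID (y NU) \<and> (\<forall>j\<in>AA. y NU j \<le> 1 - real NU * \<gamma>)" using claim[of NU] by auto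
    moreover obtain j where j: "j \<in> AA" using NI_ne[OF c0] by blast
    ultimately have "y NU j \<le> 0" "(x0 top) + r/4 \<le> y NU j" using NU_ge by (auto simp: ID_def)
    moreover have "0 \<le> (x0 top)" using c0 topn by (simp add: cube_def)
    ultimately show False using r_pos by linarith
  qed
  obtain t where t: "t \<le> NU" "\<not> (Cs (y t) \<and> \<not> Zs (y t))" "\<forall>s<t. Cs (y s) \<and> \<not> Zs (y s)"
    using least_ex[OF ex] by auto
  have It: "ID (y t)" using claim[of t] t by auto
  show ?thesis
  proof (cases "Zs (y t)")
    case True thus ?thesis using It t(1) by (intro exI[of _ t]) (auto simp: ID_def)
  next
    case False
    hence nc: "\<not> Cs (y t)" using t(2) by simp
    have Nt: "Nx (y t) (y (Suc t))" using N t(1) by simp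
    have I1: "IU F1 x0 ((x0 top) + \<gamma>) (y (Suc t))" using D4[OF It nc False Nt] .
    have S1: "SU F1 x0 ((x0 top) + \<gamma>)" using f1 f5 P_facts by (auto simp: SU_def) (smt (verit))
    define y' where "y' s = y (Suc t + s)" for s
    have N': "\<forall>s<NU. Nx (y' s) (y' (Suc s))" using N t(1) by (auto simp: y'_def)
    obtain s where s: "s \<le> NU" "Cs (y' s) \<or> Zs (y' s)" "IU F1 x0 ((x0 top) + \<gamma>) (y' s)"
      using up_phase[OF S1 _ N'] I1 by (auto simp: y'_def)
    show ?thesis
      apply (rule exI[of _ "Suc t + s"])
      using s t(1) by (auto simp: y'_def IU_def)
  qed
qed


end

definition "RR = NU + 1 + NU"

definition Gp :: "nat \<Rightarrow> nat \<Rightarrow> bool" where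
  "Gp l s \<longleftrightarrow> (\<forall>y F0 v c. (\<forall>t<Tm RR n l s. Nx (y t) (y (Suc t))) \<longrightarrow> (Cs (y 0) \<or> Zs (y 0)) \<longrightarrow>
     IU F0 v c (y 0) \<longrightarrow> SU F0 v c \<longrightarrow> 1 - c \<le> real l * \<gamma> \<longrightarrow> card (ISO (y 0) - F0) \<le> s \<longrightarrow>
     (\<exists>t\<le>Tm RR n l s. cube (y t) \<and> (Zs (y t) \<or> (Cs (y t) \<and> ISO (y t) = F0 \<and> IU F0 v c (y t)))))"


lemma G_core:
  assumes N: "\<forall>t<Tm RR n l s. Nx (y t) (y (Suc t))" and CZ: "Cs (y 0) \<or> Zs (y 0)"
    and I: "IU F0 v c (y 0)" and S: "SU F0 v c" and lev: "1 - c \<le> real l * \<gamma>" and cd: "card (ISO (y 0) - F0) \<le> s"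
    and IHo: "\<And>l'. l = Suc l' \<Longrightarrow> Gp l' n" and IHi: "\<And>s'. s = Suc s' \<Longrightarrow> Gp l s'"
  shows "\<exists>t\<le>Tm RR n l s. cube (y t) \<and> (Zs (y t) \<or> (Cs (y t) \<and> ISO (y t) = F0 \<and> IU F0 v c (y t)))"
proof -
  let ?x0 = "y 0"
  have c0: "cube ?x0" using I by (simp add: IU_def)
  have F0iso: "F0 \<subseteq> ISO ?x0" using I by (auto simp: IU_def ISO_def)
  show ?thesis
  proof (cases "Zs ?x0 \<or> ISO ?x0 = F0")
    case True thus ?thesis using CZ I c0 by (intro exI[of _ 0]) auto
  next
    case False
    hence nz: "\<not> Zs ?x0" and ne: "ISO ?x0 \<noteq> F0" by auto
    have C0: "Cs ?x0" using CZ nz by simp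
    obtain b where b: "b \<in> ISO ?x0" "b \<notin> F0" using ne F0iso by blast
    define M where "M = Max (?x0 ` ISO ?x0)"
    have "M \<in> ?x0 ` ISO ?x0" unfolding M_def using b finite_ISO by (intro Max_in) auto
    then obtain top where top: "top \<in> ISO ?x0" "?x0 top = M" by blast
    have topmax: "\<forall>a\<in>ISO ?x0. ?x0 a \<le> ?x0 top" using top finite_ISO by (auto simp: M_def)
    have bn: "b < n" using b by (simp add: ISO_def)
    have cb: "c \<le> ?x0 b" using I b bn by (simp add: IU_def)
    have ctop: "c \<le> ?x0 top" using cb topmax b by force
    have topF: "top \<notin> F0"
    proof
      assume "top \<in> F0"
      hence "?x0 top < c - r" using S I by (auto simp: SU_def IU_def)
      thus False using ctop r_pos by linarith
    qed
    have "ISO ?x0 - F0 \<noteq> {}" using b by blast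
    hence "card (ISO ?x0 - F0) \<ge> 1" using finite_ISO by (simp add: Suc_le_eq card_gt_0_iff)
    then obtain s' where s': "s = Suc s'" using cd by (cases s) auto
    obtain l' where l': "l = Suc l'"
    proof (cases l)
      case 0
      hence c1: "c \<ge> 1" using lev by simp
      obtain j where j: "j \<in> NI ?x0" using NI_ne[OF c0] by blast
      have jn: "j < n" "j \<notin> F0" using j F0iso by (auto simp: NI_def ISO_def)
      have "c \<le> ?x0 j" "?x0 j \<le> 1" using I jn c0 by (auto simp: IU_def cube_def)
      hence xj: "?x0 j = 1" using c1 by linarith
      have "top < n" using top by (simp add: ISO_def)
      hence "?x0 top \<le> 1" using c0 by (simp add: cube_def)
      hence "?x0 top = 1" using c1 ctop by linarith
      note this xj
      moreover have "j \<noteq> top" "iso ?x0 top" "top < n" using j top by (auto simp: NI_def ISO_def)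
      ultimately have False using jn r_pos by (auto simp: iso_def)
      thus ?thesis ..
    qed
    note R = round[OF c0 C0 nz top(1) topmax]
    have N1: "\<forall>t<NU + 1 + NU. Nx (y t) (y (Suc t))" using N l' s' by (auto simp: RR_def)
    obtain t1 where t1: "t1 \<le> NU + 1 + NU" "cube (y t1)"
      "Zs (y t1) \<or> (Cs (y t1) \<and> IU (ISO ?x0 - {top}) ?x0 (?x0 top + \<gamma>) (y t1))"
      using R[OF N1 refl] by blast
    show ?thesis
    proof (cases "Zs (y t1)")
      case True thus ?thesis using t1 l' s' by (intro exI[of _ t1]) (auto simp: RR_def)
    next
      case False
      hence C1: "Cs (y t1)" and I1: "IU (ISO ?x0 - {top}) ?x0 (?x0 top + \<gamma>) (y t1)" using t1 by auto
      define y1 where "y1 k = y (t1 + k)" for k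
      have S1: "SU (ISO ?x0 - {top}) ?x0 (?x0 top + \<gamma>)"
        unfolding SU_def
      proof
        show "\<forall>a\<in>ISO ?x0 - {top}. ?x0 a < ?x0 top + \<gamma> - r"
          using f1[OF c0 C0 nz top(1) topmax] P_facts(3) by force
        show "?x0 top + \<gamma> \<le> 1" using f5[OF c0 C0 nz top(1) topmax] P_facts(4) r_pos by linarith
      qed
      have N2: "\<forall>t<Tm RR n l' n. Nx (y1 t) (y1 (Suc t))" using N t1(1) l' s' by (auto simp: y1_def RR_def)
      have lev1: "1 - (?x0 top + \<gamma>) \<le> real l' * \<gamma>" using lev l' ctop by (simp add: algebra_simps)
      have cd1: "card (ISO (y1 0) - (ISO ?x0 - {top})) \<le> n"
      proof -
        have "ISO (y1 0) - (ISO ?x0 - {top}) \<subseteq> {..<n}" by (auto simp: ISO_def)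
        thus ?thesis by (metis card_lessThan card_mono finite_lessThan)
      qed
      obtain t2 where t2: "t2 \<le> Tm RR n l' n" "cube (y1 t2)"
        "Zs (y1 t2) \<or> (Cs (y1 t2) \<and> ISO (y1 t2) = ISO ?x0 - {top} \<and> IU (ISO ?x0 - {top}) ?x0 (?x0 top + \<gamma>) (y1 t2))"
      proof -
        have "Cs (y1 0)" "IU (ISO ?x0 - {top}) ?x0 (?x0 top + \<gamma>) (y1 0)" using C1 I1 by (simp_all add: y1_def)
        thus ?thesis using IHo[OF l'] N2 S1 lev1 cd1 that unfolding Gp_def by blast
      qed
      show ?thesis
      proof (cases "Zs (y1 t2)")
        case True thus ?thesis using t1 t2 l' s' by (intro exI[of _ "t1 + t2"]) (auto simp: RR_def y1_def)
      next
        case False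
        hence C2: "Cs (y1 t2)" and iso2: "ISO (y1 t2) = ISO ?x0 - {top}"
          and I2: "IU (ISO ?x0 - {top}) ?x0 (?x0 top + \<gamma>) (y1 t2)" using t2 by auto
        define y2 where "y2 k = y (t1 + t2 + k)" for k
        have N3: "\<forall>t<Tm RR n l s'. Nx (y2 t) (y2 (Suc t))" using N t1(1) t2(1) l' s' by (auto simp: y2_def RR_def)
        have I3: "IU F0 v c (y2 0)"
          unfolding IU_def
        proof (intro conjI)
          show "cube (y2 0)" using t2 by (simp add: y2_def y1_def)
          show "\<forall>a\<in>F0. a < n \<and> iso (y2 0) a \<and> y2 0 a = v a"
          proof
            fix a assume a: "a \<in> F0"
            hence a1: "a \<in> ISO ?x0 - {top}" using F0iso topF by blast
            have "a < n \<and> iso (y2 0) a \<and> y2 0 a = ?x0 a" using I2 a1 unfolding IU_def by (simp add: y2_def y1_def)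
            moreover have "?x0 a = v a" using I a unfolding IU_def by blast
            ultimately show "a < n \<and> iso (y2 0) a \<and> y2 0 a = v a" by simp
          qed
          show "\<forall>j<n. j \<notin> F0 \<longrightarrow> c \<le> y2 0 j"
          proof (intro allI impI)
            fix j assume j: "j < n" "j \<notin> F0"
            show "c \<le> y2 0 j"
            proof (cases "j \<in> ISO ?x0 - {top}")
              case True thus ?thesis using I2 I j by (auto simp: IU_def y2_def y1_def)
            next
              case False thus ?thesis using I2 j ctop P_facts(3) by (force simp: IU_def y2_def y1_def)
            qed
          qed
        qed
        have cd3: "card (ISO (y2 0) - F0) \<le> s'"
        proof -
          have "ISO (y2 0) - F0 = (ISO ?x0 - F0) - {top}" using iso2 by (auto simp: y2_def y1_def)
          hence "card (ISO (y2 0) - F0) = card (ISO ?x0 - F0) - 1" using top topF finite_ISO by simp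
          thus ?thesis using cd s' by simp
        qed
        obtain t3 where t3: "t3 \<le> Tm RR n l s'" "cube (y2 t3)"
          "Zs (y2 t3) \<or> (Cs (y2 t3) \<and> ISO (y2 t3) = F0 \<and> IU F0 v c (y2 t3))"
        proof -
          have "Cs (y2 0)" using C2 by (simp add: y2_def y1_def)
          thus ?thesis using IHi[OF s'] N3 I3 S lev cd3 that unfolding Gp_def by blast
        qed
        show ?thesis
          apply (rule exI[of _ "t1 + t2 + t3"])
          using t1 t2 t3 l' s' by (auto simp: RR_def y2_def)
      qed
    qed
  qed
qed

lemma G: "Gp l s"
proof (induction l arbitrary: s)
  case 0
  show ?case
  proof (induction s)
    case 0 show ?case unfolding Gp_def by (intro allI impI, rule G_core) auto
  next
    case (Suc s) show ?case unfolding Gp_def by (intro allI impI, rule G_core) (use Suc.IH in auto)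
  qed
next
  case (Suc l)
  have outer: "Gp l n" using Suc.IH .
  show ?case
  proof (induction s)
    case 0 show ?case unfolding Gp_def by (intro allI impI, rule G_core) (use outer in auto)
  next
    case (Suc s) show ?case unfolding Gp_def by (intro allI impI, rule G_core) (use outer Suc.IH in auto)
  qed
qed


lemma Z_nb: "Zs x \<Longrightarrow> i < n \<Longrightarrow> nb x i = {..<n}"
  by (auto simp: Zs_def nb_iff)

lemma proj_dist: "0 \<le> z' \<Longrightarrow> z' \<le> 1 \<Longrightarrow> \<bar>proj01 y - z'\<bar> \<le> \<bar>y - z'\<bar>"
  using proj01_lip[of y z'] proj01_id[of z'] by simp

lemma Z_step:
  assumes Z: "Zs x" and N: "Nx x x'" and B: "\<forall>i<n. \<bar>x i - z\<bar> \<le> B"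
  shows "Zs x' \<and> (\<forall>i<n. \<bar>x' i - z\<bar> \<le> max \<epsilon> (B - q/4))"
proof -
  have sv: "sv x = wz x" using Z by (simp add: sv_def)
  define S where "S = (\<Sum>j<n. x j)"
  define m where "m = mean x"
  define N' where "N' = real n"
  have N3: "N' \<ge> 3" using n3 by (simp add: N'_def)
  have Sm: "S = N' * m" using N3 by (simp add: S_def m_def mean_def N'_def)
  have Slo: "N' * (z - B) \<le> S"
  proof -
    have "(\<Sum>j<n. z - B) \<le> S" unfolding S_def by (rule sum_mono) (use B in force)
    thus ?thesis by (simp add: N'_def)
  qed
  have Shi: "S \<le> N' * (z + B)"
  proof -
    have "S \<le> (\<Sum>j<n. z + B)" unfolding S_def by (rule sum_mono) (use B in force)
    thus ?thesis by (simp add: N'_def)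
  qed
  define w where "w = wz x"
  have wdef: "w = max (-P) (min P ((z - m) * N' / (N' - 1)))" by (simp add: w_def wz_def m_def N'_def)
  have th: "N' - 1 \<ge> 2 * N' / 3" using N3 by simp
  have Pe: "P - \<epsilon> \<ge> 7*q/16" using eps_q by (simp add: P_def)
  have key: "(N' - 1) * (P - \<epsilon>) \<ge> N' * (q/4)"
  proof -
    have "(N' - 1) * (P - \<epsilon>) \<ge> (2 * N' / 3) * (P - \<epsilon>)" by (rule mult_right_mono[OF th]) (use P_facts in auto)
    moreover have "(2 * N' / 3) * (P - \<epsilon>) \<ge> (2 * N' / 3) * (7*q/16)" by (rule mult_left_mono[OF Pe]) (use N3 in auto)
    moreover have "(2 * N' / 3) * (7*q/16) \<ge> N' * (q/4)" using N3 q_pos by (simp add: field_simps)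
    ultimately show ?thesis by linarith
  qed
  have yb: "\<bar>y - z\<bar> \<le> max \<epsilon> (B - q/4)"
    if lo: "S + (N' - 1) * (w - \<epsilon>) \<le> N' * y" and hi: "N' * y \<le> S + (N' - 1) * (w + \<epsilon>)" for y
  proof -
    have e1: "(N' - 1) * \<epsilon> \<le> N' * \<epsilon>" using eps_pos by simp
    consider "\<bar>(z - m) * N' / (N' - 1)\<bar> \<le> P" | "(z - m) * N' / (N' - 1) > P" | "(z - m) * N' / (N' - 1) < -P" by linarith
    thus ?thesis
    proof cases
      case 1
      have "(z - m) * N' / (N' - 1) \<le> P \<and> - ((z - m) * N' / (N' - 1)) \<le> P"
        using 1 abs_le_iff by blast
      hence "w = (z - m) * N' / (N' - 1)" using wdef by (simp add: max_def min_def)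
      hence w1: "(N' - 1) * w = (z - m) * N'" using N3 by simp
      have "N' * (z - \<epsilon>) \<le> N' * y" using lo w1 e1 Sm by (simp add: algebra_simps)
      moreover have "N' * y \<le> N' * (z + \<epsilon>)" using hi w1 e1 Sm by (simp add: algebra_simps)
      ultimately have "z - \<epsilon> \<le> y" "y \<le> z + \<epsilon>" using N3 by simp_all
      thus ?thesis by simp
    next
      case 2
      hence wP: "w = P" using wdef P_facts q_pos by (simp add: P_def)
      have "(z - m) * N' > (N' - 1) * P" using 2 N3 by (simp add: field_simps)
      hence "N' * y < N' * (z + \<epsilon>)" using hi wP e1 Sm by (simp add: algebra_simps)
      hence up: "y < z + \<epsilon>" using N3 by simp
      have "N' * (z - B + q/4) \<le> N' * y" using lo wP key Slo by (simp add: algebra_simps)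
      hence "z - B + q/4 \<le> y" using N3 by simp
      thus ?thesis using up by simp
    next
      case 3
      hence wP: "w = -P" using wdef P_facts q_pos by (simp add: P_def)
      have "(z - m) * N' < -(N' - 1) * P" using 3 N3 by (simp add: field_simps)
      hence "N' * (z - \<epsilon>) < N' * y" using lo wP e1 Sm by (simp add: algebra_simps)
      hence dn: "z - \<epsilon> < y" using N3 by simp
      have "(N' - 1) * (-P + \<epsilon>) \<le> - (N' * (q/4))" using key by (simp add: algebra_simps)
      hence "N' * y \<le> N' * (z + B - q/4)" using hi wP Shi by (simp add: algebra_simps)
      hence "y \<le> z + B - q/4" using N3 by simp
      thus ?thesis using dn by simp
    qed
  qed
  have dist: "\<bar>x' i - z\<bar> \<le> max \<epsilon> (B - q/4)" if i: "i < n" for i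
  proof -
    obtain y where y: "x' i = proj01 y"
      and lo: "(\<Sum>j\<in>nb x i. x j) + (real (card (nb x i)) - 1) * (sv x - \<epsilon>) \<le> real (card (nb x i)) * y"
      and hi: "real (card (nb x i)) * y \<le> (\<Sum>j\<in>nb x i. x j) + (real (card (nb x i)) - 1) * (sv x + \<epsilon>)"
      using gen_step[OF N i] by blast
    have "nb x i = {..<n}" using Z_nb[OF Z i] .
    hence "\<bar>y - z\<bar> \<le> max \<epsilon> (B - q/4)" using yb[of y] lo hi sv by (simp add: S_def N'_def w_def)
    thus ?thesis using y proj_dist[OF z0 z1, of y] by linarith
  qed
  have "Zs x'" unfolding Zs_def
  proof (intro allI impI)
    fix i j assume "i < n" "j < n"
    hence "\<bar>x' i - x' j\<bar> \<le> 2 * \<epsilon>" using gen_pair[OF N] Z_nb[OF Z] by metis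
    thus "\<bar>x' i - x' j\<bar> \<le> r" using P_facts(5) eps_pos by linarith
  qed
  thus ?thesis using dist by blast
qed

lemma max_aux: "(d::real) \<ge> 0 \<Longrightarrow> max e (max e a - d) \<le> max e (a - d)"
  unfolding max_def by auto

definition "NZ = nat \<lceil>4/q\<rceil>"

lemma Z_phase:
  assumes Z: "Zs (y 0)" and c: "cube (y 0)" and N: "\<forall>t<NZ. Nx (y t) (y (Suc t))"
  shows "cube (y NZ) \<and> (\<forall>i<n. \<bar>y NZ i - z\<bar> \<le> \<epsilon>)"
proof -
  have claim: "k \<le> NZ \<longrightarrow> Zs (y k) \<and> cube (y k) \<and> (\<forall>i<n. \<bar>y k i - z\<bar> \<le> max \<epsilon> (1 - real k * (q/4)))" for k
  proof (induction k)
    case 0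
    have "\<forall>i<n. \<bar>y 0 i - z\<bar> \<le> 1" using c z0 z1 by (auto simp: cube_def abs_le_iff)
    thus ?case using Z c by (simp add: le_max_iff_disj)
  next
    case (Suc k)
    show ?case
    proof
      assume k: "Suc k \<le> NZ"
      hence IH: "Zs (y k)" "\<forall>i<n. \<bar>y k i - z\<bar> \<le> max \<epsilon> (1 - real k * (q/4))" using Suc by auto
      have Nk: "Nx (y k) (y (Suc k))" using N k by simp
      have st: "Zs (y (Suc k)) \<and> (\<forall>i<n. \<bar>y (Suc k) i - z\<bar> \<le> max \<epsilon> (max \<epsilon> (1 - real k * (q/4)) - q/4))"
        using Z_step[OF IH(1) Nk IH(2)] .
      have e: "1 - real (Suc k) * (q/4) = (1 - real k * (q/4)) - q/4" by (simp add: algebra_simps)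
      have "max \<epsilon> (max \<epsilon> (1 - real k * (q/4)) - q/4) \<le> max \<epsilon> (1 - real (Suc k) * (q/4))"
        unfolding e by (rule max_aux) (use q_pos in simp)
      thus "Zs (y (Suc k)) \<and> cube (y (Suc k)) \<and> (\<forall>i<n. \<bar>y (Suc k) i - z\<bar> \<le> max \<epsilon> (1 - real (Suc k) * (q/4)))"
        using st Nx_cube[OF Nk] by force
    qed
  qed
  have "real NZ \<ge> 4/q" unfolding NZ_def by linarith
  hence "1 - real NZ * (q/4) \<le> 0" using q_pos by (simp add: field_simps)
  hence "max \<epsilon> (1 - real NZ * (q/4)) = \<epsilon>" using eps_pos by simp
  thus ?thesis using claim[of NZ] by simp
qed


definition "LL = nat \<lceil>1/\<gamma>\<rceil>"
definition "TT = NU + Tm RR n LL n + NZ"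

lemma main_traj:
  assumes c: "cube (y 0)" and N: "\<forall>t<TT. Nx (y t) (y (Suc t))"
  shows "\<exists>t\<le>TT. cube (y t) \<and> (\<forall>i<n. \<bar>y t i - z\<bar> \<le> \<epsilon>)"
proof -
  have I0: "IU {} (\<lambda>_. 0) 0 (y 0)" using c by (auto simp: IU_def cube_def)
  have S0: "SU {} (\<lambda>_. 0) 0" by (simp add: SU_def)
  obtain t0 where t0: "t0 \<le> NU" "Cs (y t0) \<or> Zs (y t0)" "IU {} (\<lambda>_. 0) 0 (y t0)"
    using up_phase[of "{}" "\<lambda>_. 0" 0 y, OF S0 I0] N by (auto simp: TT_def)
  define y1 where "y1 k = y (t0 + k)" for k
  have lev: "1 - 0 \<le> real LL * \<gamma>"
  proof -
    have "real LL \<ge> 1/\<gamma>" unfolding LL_def by linarith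
    thus ?thesis using P_facts(3) by (simp add: field_simps)
  qed
  have cd: "card (ISO (y1 0) - {}) \<le> n"
  proof -
    have "ISO (y1 0) \<subseteq> {..<n}" by (auto simp: ISO_def)
    thus ?thesis by (metis Diff_empty card_lessThan card_mono finite_lessThan)
  qed
  have N1: "\<forall>t<Tm RR n LL n. Nx (y1 t) (y1 (Suc t))" using N t0(1) by (auto simp: y1_def TT_def)
  have "Cs (y1 0) \<or> Zs (y1 0)" "IU {} (\<lambda>_. 0) 0 (y1 0)" using t0 by (simp_all add: y1_def)
  then obtain t1 where t1: "t1 \<le> Tm RR n LL n" "cube (y1 t1)"
     "Zs (y1 t1) \<or> (Cs (y1 t1) \<and> ISO (y1 t1) = {} \<and> IU {} (\<lambda>_. 0) 0 (y1 t1))"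
    using G[of LL n] N1 S0 lev cd unfolding Gp_def by blast
  have Z1: "Zs (y1 t1)" using t1(3) notZ_ISO by blast
  define y2 where "y2 k = y (t0 + t1 + k)" for k
  have N2: "\<forall>t<NZ. Nx (y2 t) (y2 (Suc t))" using N t0(1) t1(1) by (auto simp: y2_def TT_def)
  have "cube (y2 NZ) \<and> (\<forall>i<n. \<bar>y2 NZ i - z\<bar> \<le> \<epsilon>)"
    by (rule Z_phase) (use Z1 t1(2) N2 in \<open>auto simp: y2_def y1_def\<close>)
  thus ?thesis using t0(1) t1(1) by (intro exI[of _ "t0 + t1 + NZ"]) (auto simp: y2_def TT_def)
qed

lemma TT_pos: "TT > 0"
proof -
  have "4/q > 0" using q_pos by simp
  hence "NZ > 0" unfolding NZ_def by simp
  thus ?thesis by (simp add: TT_def)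
qed

lemma strat_bound: "\<bar>strat x j i\<bar> \<le> P"
proof -
  have "P > 0" using q_pos by (simp add: P_def)
  moreover have "\<bar>max (-P) (min P a)\<bar> \<le> P" if "P > 0" for a using that by (auto simp: max_def min_def abs_le_iff)
  ultimately show ?thesis by (simp add: strat_def wz_def)
qed

end

theorem lemma10:
  fixes n :: nat and rr \<eta> z \<alpha> :: real
  assumes "n \<ge> 3" and "\<eta> > 0"
    and "rr \<le> 1" and "rr \<ge> 1 / (real n - 1)"
    and "0 \<le> z" and "z \<le> 1" and "\<alpha> > 0"
  shows "robustly_reachable_C4 n (\<lambda>_. rr) \<eta>
           {x \<in> unit_cube n. (MAX i\<in>{..<n}. \<bar>x i - z\<bar>) < \<alpha>}"
proof -
  interpret L: L10 n rr \<eta> z \<alpha> by unfold_locales (use assms in auto)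
  let ?S = "{x \<in> unit_cube n. (MAX i\<in>{..<n}. \<bar>x i - z\<bar>) < \<alpha>}"
  have ne: "{..<n} \<noteq> {}" using assms(1) by (simp add: lessThan_empty_iff)
  show ?thesis unfolding robustly_reachable_C4_def
  proof (intro exI conjI ballI)
    show "0 < L.TT" by (rule L.TT_pos)
    show "0 < L.\<epsilon>" by (rule L.eps_pos)
    show "L.\<epsilon> < \<eta>" using L.eps_q L.q_le_eta L.q_pos by linarith
    fix x0 assume x0: "x0 \<in> unit_cube n"
    show "x0 \<in> ?S \<or> (\<exists>D U. (\<forall>h i. i < n \<longrightarrow> L.\<epsilon> \<le> D h i \<and> D h i < \<eta>) \<and>
           (\<forall>h i j. i < n \<longrightarrow> j < n \<longrightarrow> j \<noteq> i \<longrightarrow> - \<eta> + D h i \<le> U h j i \<and> U h j i \<le> \<eta> - D h i) \<and>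
           (\<forall>B. (\<forall>t<L.TT. \<forall>i<n. \<forall>j<n. j \<noteq> i \<longrightarrow> \<bar>B t j i\<bar> \<le> D (c4_hist n (\<lambda>_. rr) x0 U B t) i) \<longrightarrow>
              (\<exists>t\<in>{1..L.TT}. c4_traj n (\<lambda>_. rr) x0 U B t \<in> ?S)))"
    proof (cases "x0 \<in> ?S")
      case True thus ?thesis by blast
    next
      case False
      define U where "U = (\<lambda>h j i. L.strat (last h) j i)"
      have Ub: "- \<eta> + L.\<epsilon> \<le> U h j i \<and> U h j i \<le> \<eta> - L.\<epsilon>" for h j i
        using L.strat_bound[of "last h" j i] L.P_facts(7) unfolding U_def by (simp add: abs_le_iff)
      have main: "\<exists>t\<in>{1..L.TT}. c4_traj n (\<lambda>_. rr) x0 U B t \<in> ?S"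
        if B: "\<forall>t<L.TT. \<forall>i<n. \<forall>j<n. j \<noteq> i \<longrightarrow> \<bar>B t j i\<bar> \<le> L.\<epsilon>" for B
      proof -
        define y where "y t = c4_traj n (\<lambda>_. rr) x0 U B t" for t
        have ys: "y (Suc t) = c4_step n (\<lambda>_. rr) (y t) (L.strat (y t)) (B t)" for t
          by (simp add: y_def c4_traj_def Let_def U_def)
        have y0: "y 0 = x0" by (simp add: y_def c4_traj_def)
        have N: "\<forall>t<L.TT. L.Nx (y t) (y (Suc t))"
          using B ys unfolding L.Nx_def by blast
        have c0: "L.cube (y 0)" using x0 y0 by (simp add: L.cube_def unit_cube_def)
        obtain t where t: "t \<le> L.TT" "L.cube (y t)" "\<forall>i<n. \<bar>y t i - z\<bar> \<le> L.\<epsilon>"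
          using L.main_traj[OF c0 N] by blast
        have inS: "y t \<in> ?S"
        proof -
          have "y t \<in> unit_cube n" using t(2) by (simp add: L.cube_def unit_cube_def)
          moreover have "(MAX i\<in>{..<n}. \<bar>y t i - z\<bar>) < \<alpha>"
            using t(3) L.eps_alpha ne by (subst Max_less_iff) auto
          ultimately show ?thesis by simp
        qed
        have "t \<noteq> 0"
        proof
          assume "t = 0" thus False using inS False y0 by simp
        qed
        thus ?thesis using inS t(1) by (intro bexI[of _ t]) (auto simp: y_def)
      qed
      show ?thesis
        apply (rule disjI2)
        apply (rule exI[of _ "\<lambda>h i. L.\<epsilon>"])
        apply (rule exI[of _ U])
        using Ub main L.eps_q L.q_le_eta L.q_pos by auto
    qed
  qed
qed

end
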